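(* Let $X$ be a uniform space equipped with a uniformly continuous and expansive action of a group $\Gamma$, and let $f \colon X \to X$ be a uniformly continuous and $\Gamma$-equivariant map. Let $Y$ be a compact subset of $X$. Suppose that there exists a net $(Z_i)_{i \in I}$ of $\Gamma$-invariant subsets of $X$ which converges to $Y$ in the Hausdorff-Bourbaki topology on $\mathcal{P}(X)$, such that for every $i \in I$ one has $f(Z_i) \subset Z_i$ and the restriction map $f\vert_{Z_i} \colon Z_i \to Z_i$ is surjunctive. Then $Y$ is $\Gamma$-invariant, $f(Y) \subset Y$, and the restriction map $f\vert_Y \colon Y \to Y$ is surjunctive.
   Context: A map $g \colon S \to S$ from a set to itself is surjunctive if it is surjective or not injective. For a binary relation $V \subset X \times X$ and $A \subset X$, $V[A] = \{x \in X : (x,a) \in V \text{ for some } a \in A\}$. An action of $\Gamma$ on a uniform space $X$ is uniformly continuous if each map $x \mapsto \gamma x$ is uniformly continuous; it is expansive if there is an entourage $W_0$ of $X$ such that for any two distinct $x,y \in X$ there is $\gamma \in \Gamma$ with $(\gamma x,\gamma y) \notin W_0$. The Hausdorff-Bourbaki uniform structure on the set $\mathcal{P}(X)$ of all subsets of $X$ is the uniform structure having as a base the sets $\widehat{V} = \{(A,B) \in \mathcal{P}(X)\times\mathcal{P}(X) : B \subset V[A] \text{ and } A \subset V[B]\}$, $V$ an entourage of $X$; the Hausdorff-Bourbaki topology is its associated topology. *)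

theory Defs
  imports "HOL-Analysis.Analysis"
begin

definition entourage :: "('a::uniform_space \<times> 'a) set \<Rightarrow> bool" where
  "entourage V \<longleftrightarrow> eventually (\<lambda>p. p \<in> V) uniformity"

definition rel_image :: "('a \<times> 'a) set \<Rightarrow> 'a set \<Rightarrow> 'a set" where
  "rel_image V A = {x. \<exists>a\<in>A. (x, a) \<in> V}"

definition hb_entourage :: "('a \<times> 'a) set \<Rightarrow> ('a set \<times> 'a set) set" where
  "hb_entourage V = {(A, B). B \<subseteq> rel_image V A \<and> A \<subseteq> rel_image V B}"

definition hb_net_converges :: "('i::preorder \<Rightarrow> 'a::uniform_space set) \<Rightarrow> 'a set \<Rightarrow> bool" where
  "hb_net_converges Z Y \<longleftrightarrow>
     (\<forall>V. entourage V \<longrightarrow> (\<exists>i0. \<forall>i. i0 \<le> i \<longrightarrow> (Z i, Y) \<in> hb_entourage V))"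

definition directed_type :: "'i::preorder itself \<Rightarrow> bool" where
  "directed_type _ \<longleftrightarrow> (\<forall>a b::'i. \<exists>c. a \<le> c \<and> b \<le> c)"

definition group_action :: "('g::group_add \<Rightarrow> 'a \<Rightarrow> 'a) \<Rightarrow> bool" where
  "group_action act \<longleftrightarrow> (\<forall>x. act 0 x = x) \<and> (\<forall>g h x. act (g + h) x = act g (act h x))"

definition expansive_action :: "('g \<Rightarrow> 'a::uniform_space \<Rightarrow> 'a) \<Rightarrow> bool" where
  "expansive_action act \<longleftrightarrow>
     (\<exists>W0. entourage W0 \<and> (\<forall>x y. x \<noteq> y \<longrightarrow> (\<exists>g. (act g x, act g y) \<notin> W0)))"

definition invariant_set :: "('g \<Rightarrow> 'a \<Rightarrow> 'a) \<Rightarrow> 'a set \<Rightarrow> bool" where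
  "invariant_set act Z \<longleftrightarrow> (\<forall>g. \<forall>x\<in>Z. act g x \<in> Z)"

definition equivariant :: "('g \<Rightarrow> 'a \<Rightarrow> 'a) \<Rightarrow> ('a \<Rightarrow> 'a) \<Rightarrow> bool" where
  "equivariant act f \<longleftrightarrow> (\<forall>g x. f (act g x) = act g (f x))"

text \<open>The restriction of f to S (assumed to map S into S) is surjunctive:
  surjective onto S or not injective on S.\<close>
definition surjunctive_on :: "'a set \<Rightarrow> ('a \<Rightarrow> 'a) \<Rightarrow> bool" where
  "surjunctive_on S f \<longleftrightarrow> f ` S = S \<or> \<not> inj_on f S"

end

theory Submission
  imports Defs
begin

lemma ent_int: "entourage U \<Longrightarrow> entourage V \<Longrightarrow> entourage (U \<inter> V)"
  unfolding entourage_def by (auto elim: eventually_elim2)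

lemma ent_refl: "entourage V \<Longrightarrow> (x, x) \<in> V"
  unfolding entourage_def using uniformity_refl[of "\<lambda>p. p \<in> V"] by simp

lemma ent_split3:
  assumes "entourage (V::('a::uniform_space \<times> 'a) set)"
  shows "\<exists>E. entourage E \<and> (\<forall>a b. (a,b)\<in>E \<longrightarrow> (b,a)\<in>E) \<and>
     (\<forall>a b c d. (a,b)\<in>E \<longrightarrow> (b,c)\<in>E \<longrightarrow> (c,d)\<in>E \<longrightarrow> (a,d)\<in>V)"
proof -
  obtain D1 where D1: "eventually D1 uniformity" "\<And>x y z. D1 (x,y) \<Longrightarrow> D1 (y,z) \<Longrightarrow> (x,z) \<in> V"
    using uniformity_transE[of "\<lambda>p. p \<in> V"] assms unfolding entourage_def by blast
  obtain D2 where D2: "eventually D2 uniformity" "\<And>x y z. D2 (x,y) \<Longrightarrow> D2 (y,z) \<Longrightarrow> D1 (x,z)"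
    using uniformity_transE[OF D1(1)] by blast
  have e1: "eventually (\<lambda>(x,y). D2 (y,x)) uniformity" using uniformity_sym[OF D2(1)] .
  define E where "E = {p. D2 p \<and> D2 (snd p, fst p)}"
  have "entourage E" unfolding entourage_def E_def
    using eventually_conj[OF D2(1) e1] by (simp add: case_prod_beta)
  moreover have "\<forall>a b. (a,b)\<in>E \<longrightarrow> (b,a)\<in>E" unfolding E_def by auto
  moreover have "(a,d)\<in>V" if "(a,b)\<in>E" "(b,c)\<in>E" "(c,d)\<in>E" for a b c d
  proof -
    have "D2 (a,b)" "D2 (b,c)" "D2 (c,d)" using that unfolding E_def by auto
    hence "D1 (a,c)" "D1 (c,c)" using D2(2) uniformity_refl[OF D1(1)] by auto
    have "D1 (c,d)" using D2(2)[OF \<open>D2 (c,d)\<close>] uniformity_refl[OF D2(1)] by auto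
    thus ?thesis using D1(2) \<open>D1 (a,c)\<close> by blast
  qed
  ultimately show ?thesis by blast
qed

lemma ent_nhd:
  assumes "entourage (E::('a::uniform_space \<times> 'a) set)"
  shows "\<exists>N. open N \<and> p \<in> N \<and> (\<forall>u\<in>N. (p,u) \<in> E)"
proof -
  have "eventually (\<lambda>u. (p,u) \<in> E) (nhds p)"
    unfolding eventually_nhds_uniformity using assms unfolding entourage_def
    by (auto elim: eventually_mono)
  thus ?thesis unfolding eventually_nhds by blast
qed

lemma ent_uc:
  assumes "uniformly_continuous_on UNIV h" "entourage V"
  shows "\<exists>U. entourage U \<and> (\<forall>a b. (a,b)\<in>U \<longrightarrow> (h a, h b)\<in>V)"
proof -
  have "eventually (\<lambda>(x, y). x \<in> UNIV \<longrightarrow> y \<in> UNIV \<longrightarrow> (h x, h y) \<in> V) uniformity"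
    using uniformly_continuous_onD[OF assms(1), of "\<lambda>p. p \<in> V"] assms(2)
    unfolding entourage_def by simp
  thus ?thesis unfolding entourage_def by (intro exI[of _ "{(x,y). (h x, h y) \<in> V}"]) (simp add: case_prod_unfold)
qed

lemma diag_interior:
  assumes "entourage (W::('a::uniform_space \<times> 'a) set)"
  shows "(x,x) \<in> interior W"
proof -
  obtain E where E: "entourage E" "\<forall>a b. (a,b)\<in>E \<longrightarrow> (b,a)\<in>E"
     "\<forall>a b c d. (a,b)\<in>E \<longrightarrow> (b,c)\<in>E \<longrightarrow> (c,d)\<in>E \<longrightarrow> (a,d)\<in>W"
    using ent_split3[OF assms] by blast
  obtain N where N: "open N" "x \<in> N" "\<forall>u\<in>N. (x,u) \<in> E" using ent_nhd[OF E(1)] by blast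
  have "N \<times> N \<subseteq> W"
  proof
    fix q assume "q \<in> N \<times> N"
    then obtain u v where q: "q = (u,v)" "u \<in> N" "v \<in> N" by auto
    thus "q \<in> W" using N(3) E(2,3) ent_refl[OF E(1)] by meson
  qed
  thus ?thesis using N by (intro interiorI[of "N \<times> N"]) (auto intro: open_Times)
qed

lemma L:
  fixes K :: "('a::uniform_space \<times> 'a) set"
  assumes sep: "\<forall>p q::'a. p \<noteq> q \<longrightarrow> (\<exists>V. entourage V \<and> (p,q) \<notin> V)"
    and K: "compact K" and near: "\<forall>T. entourage T \<longrightarrow> (\<exists>k\<in>K. k \<in> T)"
  shows "\<exists>x. (x,x) \<in> K"
proof (rule ccontr)
  assume nd: "\<not> ?thesis"
  have "\<exists>E N1 N2. entourage E \<and> open N1 \<and> open N2 \<and> k \<in> N1 \<times> N2 \<and>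
      (\<forall>u\<in>N1. \<forall>v\<in>N2. (u,v) \<notin> E)" if "k \<in> K" for k
  proof -
    obtain p q where k: "k = (p,q)" by fastforce
    with nd that have "p \<noteq> q" by auto
    then obtain V where V: "entourage V" "(p,q) \<notin> V" using sep by blast
    obtain E where E: "entourage E" "\<forall>a b. (a,b)\<in>E \<longrightarrow> (b,a)\<in>E"
     "\<forall>a b c d. (a,b)\<in>E \<longrightarrow> (b,c)\<in>E \<longrightarrow> (c,d)\<in>E \<longrightarrow> (a,d)\<in>V"
      using ent_split3[OF V(1)] by blast
    obtain N1 where N1: "open N1" "p \<in> N1" "\<forall>u\<in>N1. (p,u) \<in> E" using ent_nhd[OF E(1)] by blast
    obtain N2 where N2: "open N2" "q \<in> N2" "\<forall>u\<in>N2. (q,u) \<in> E" using ent_nhd[OF E(1)] by blast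
    have "\<forall>u\<in>N1. \<forall>v\<in>N2. (u,v) \<notin> E" using N1(3) N2(3) E(2,3) V(2) by meson
    thus ?thesis using E(1) N1 N2 k by blast
  qed
  then obtain E N1 N2 where EO: "\<And>k. k \<in> K \<Longrightarrow> entourage (E k) \<and> open (N1 k) \<and> open (N2 k) \<and>
     k \<in> N1 k \<times> N2 k \<and> (\<forall>u\<in>N1 k. \<forall>v\<in>N2 k. (u,v) \<notin> E k)"
    by metis
  obtain D where D: "D \<subseteq> K" "finite D" "K \<subseteq> (\<Union>k\<in>D. N1 k \<times> N2 k)"
    using compactE_image[OF K, of K "\<lambda>k. N1 k \<times> N2 k"] EO by (blast intro: open_Times)
  define T where "T = (\<Inter>k\<in>D. E k)"
  have "entourage T"
  proof -
    have "eventually (\<lambda>p. \<forall>k\<in>D. p \<in> E k) uniformity"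
      using D EO unfolding entourage_def by (subst eventually_ball_finite_distrib) auto
    thus ?thesis unfolding entourage_def T_def by simp
  qed
  then obtain k where "k \<in> K" "k \<in> T" using near by blast
  then obtain k' where "k' \<in> D" "k \<in> N1 k' \<times> N2 k'" using D(3) by blast
  moreover have "k \<in> E k'" using \<open>k \<in> T\<close> \<open>k' \<in> D\<close> T_def by auto
  ultimately show False using EO[of k'] D(1) by (cases k) auto
qed

lemma CC:
  fixes A :: "'a::uniform_space set"
  assumes sep: "\<forall>p q::'a. p \<noteq> q \<longrightarrow> (\<exists>V. entourage V \<and> (p,q) \<notin> V)"
    and A: "compact A" and near: "\<forall>V. entourage V \<longrightarrow> (\<exists>a\<in>A. (p,a) \<in> V)"
  shows "p \<in> A"
proof -
  have "compact ({p} \<times> A)" using A by (intro compact_Times) auto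
  then obtain x where "(x,x) \<in> {p} \<times> A" using L[OF sep] near by fastforce
  thus ?thesis by auto
qed

lemma UI:
  fixes f :: "'a::uniform_space \<Rightarrow> 'a"
  assumes sep: "\<forall>p q::'a. p \<noteq> q \<longrightarrow> (\<exists>V. entourage V \<and> (p,q) \<notin> V)"
    and Y: "compact Y" and cf: "continuous_on Y f" and inj: "inj_on f Y" and W: "entourage W"
  shows "\<exists>T. entourage T \<and> (\<forall>y\<in>Y. \<forall>y'\<in>Y. (f y, f y') \<in> T \<longrightarrow> (y,y') \<in> W)"
proof (rule ccontr)
  assume nt: "\<not> ?thesis"
  define K where "K = (\<lambda>p. (f (fst p), f (snd p))) ` ((Y \<times> Y) - interior W)"
  have "compact ((Y \<times> Y) - interior W)" using Y by (intro compact_diff compact_Times) auto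
  moreover have "continuous_on ((Y \<times> Y) - interior W) (\<lambda>p. (f (fst p), f (snd p)))"
  proof -
    have "continuous_on (Y \<times> Y) (\<lambda>p. (f (fst p), f (snd p)))"
      by (intro continuous_on_Pair continuous_on_compose2[OF cf] continuous_on_fst continuous_on_snd continuous_on_id) auto
    thus ?thesis by (rule continuous_on_subset) auto
  qed
  ultimately have cK: "compact K" unfolding K_def by (rule compact_continuous_image[rotated])
  have "\<forall>T. entourage T \<longrightarrow> (\<exists>k\<in>K. k \<in> (T::('a \<times> 'a) set))"
  proof (intro allI impI)
    fix T :: "('a \<times> 'a) set" assume "entourage T"
    then obtain y y' where "y \<in> Y" "y' \<in> Y" "(f y, f y') \<in> T" "(y,y') \<notin> W" using nt by blast
    hence "(y,y') \<notin> interior W" using interior_subset by blast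
    thus "\<exists>k\<in>K. k \<in> T" unfolding K_def using \<open>y \<in> Y\<close> \<open>y' \<in> Y\<close> \<open>(f y, f y') \<in> T\<close>
      by (intro bexI[of _ "(f y, f y')"]) (auto intro!: image_eqI[of _ _ "(y,y')"])
  qed
  then obtain x where "(x,x) \<in> K" using L[OF sep cK] by blast
  then obtain a b where ab: "a \<in> Y" "b \<in> Y" "(a,b) \<notin> interior W" "f a = x" "f b = x"
    unfolding K_def by auto
  hence "a = b" using inj by (auto dest: inj_onD)
  thus False using ab diag_interior[OF W] by auto
qed

theorem theorem1p1:
  fixes act :: "'g::group_add \<Rightarrow> 'a::uniform_space \<Rightarrow> 'a"
    and f :: "'a \<Rightarrow> 'a"
    and Y :: "'a set"
    and Z :: "'i::preorder \<Rightarrow> 'a set"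
  assumes "group_action act"
    and "\<forall>g. uniformly_continuous_on UNIV (act g)"
    and "expansive_action act"
    and "uniformly_continuous_on UNIV f"
    and "equivariant act f"
    and "compact Y"
    and "directed_type TYPE('i)"
    and "\<forall>i. invariant_set act (Z i)"
    and "hb_net_converges Z Y"
    and "\<forall>i. f ` (Z i) \<subseteq> Z i"
    and "\<forall>i. surjunctive_on (Z i) f"
  shows "invariant_set act Y \<and> f ` Y \<subseteq> Y \<and> surjunctive_on Y f"
proof -
  note ucg = assms(2) and ucf = assms(4) and Yc = assms(6)
  obtain W0 where W0: "entourage W0" "\<forall>x y. x \<noteq> y \<longrightarrow> (\<exists>g. (act g x, act g y) \<notin> W0)"
    using assms(3) unfolding expansive_action_def by blast
  have sep: "\<forall>p q::'a. p \<noteq> q \<longrightarrow> (\<exists>V. entourage V \<and> (p,q) \<notin> V)"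
  proof (intro allI impI)
    fix p q :: 'a assume "p \<noteq> q"
    then obtain g where g: "(act g p, act g q) \<notin> W0" using W0 by blast
    obtain U where "entourage U" "\<forall>a b. (a,b)\<in>U \<longrightarrow> (act g a, act g b)\<in>W0"
      using ent_uc[OF spec[OF ucg, of g] W0(1)] by blast
    thus "\<exists>V. entourage V \<and> (p,q) \<notin> V" using g by blast
  qed
  have hb: "\<exists>i0. \<forall>i. i0 \<le> i \<longrightarrow> (\<forall>y\<in>Y. \<exists>z\<in>Z i. (y,z) \<in> V) \<and> (\<forall>z\<in>Z i. \<exists>y\<in>Y. (z,y) \<in> V)"
    if "entourage V" for V
    using assms(9) that unfolding hb_net_converges_def hb_entourage_def rel_image_def
    by (simp add: subset_iff) blast
  have inv: "\<forall>x\<in>Z i. act g x \<in> Z i" for i g using assms(8) unfolding invariant_set_def by blast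
  have fZ: "\<forall>x\<in>Z i. f x \<in> Z i" for i using assms(10) by blast
  have transfer: "h y \<in> Y" if uch: "uniformly_continuous_on UNIV h" and hZ: "\<And>i x. x \<in> Z i \<Longrightarrow> h x \<in> Z i"
    and y: "y \<in> Y" for h :: "'a \<Rightarrow> 'a" and y
  proof (rule CC[OF sep Yc], intro allI impI)
    fix V :: "('a \<times> 'a) set" assume V: "entourage V"
    obtain E where E: "entourage E" "\<forall>a b. (a,b)\<in>E \<longrightarrow> (b,a)\<in>E"
      "\<forall>a b c d. (a,b)\<in>E \<longrightarrow> (b,c)\<in>E \<longrightarrow> (c,d)\<in>E \<longrightarrow> (a,d)\<in>V"
      using ent_split3[OF V] by blast
    obtain U where U: "entourage U" "\<forall>a b. (a,b)\<in>U \<longrightarrow> (h a, h b)\<in>E"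
      using ent_uc[OF uch E(1)] by blast
    obtain i0 where i0: "\<forall>i. i0 \<le> i \<longrightarrow> (\<forall>y\<in>Y. \<exists>z\<in>Z i. (y,z) \<in> U \<inter> E) \<and> (\<forall>z\<in>Z i. \<exists>y\<in>Y. (z,y) \<in> U \<inter> E)"
      using hb[OF ent_int[OF U(1) E(1)]] by blast
    then obtain z where z: "z \<in> Z i0" "(y,z) \<in> U" using y by blast
    then obtain y' where y': "y' \<in> Y" "(h z, y') \<in> E" using i0 hZ by blast
    have "(h y, h z) \<in> E" using U z by blast
    hence "(h y, y') \<in> V" using E(3)[rule_format, OF _ y'(2) ent_refl[OF E(1)]] by blast
    thus "\<exists>a\<in>Y. (h y, a) \<in> V" using y' by blast
  qed
  have invY: "invariant_set act Y" unfolding invariant_set_def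
    using transfer[OF spec[OF ucg]] inv by blast
  have fY: "f ` Y \<subseteq> Y" using transfer[OF ucf] fZ by blast
  have "surjunctive_on Y f" unfolding surjunctive_on_def
  proof (rule disjCI)
    assume "\<not> \<not> inj_on f Y"
    hence injY: "inj_on f Y" by simp
    have cf: "continuous_on Y f" using uniformly_continuous_imp_continuous[OF ucf] continuous_on_subset by blast
    obtain E0 where E0: "entourage E0" "\<forall>a b. (a,b)\<in>E0 \<longrightarrow> (b,a)\<in>E0"
      "\<forall>a b c d. (a,b)\<in>E0 \<longrightarrow> (b,c)\<in>E0 \<longrightarrow> (c,d)\<in>E0 \<longrightarrow> (a,d)\<in>W0"
      using ent_split3[OF W0(1)] by blast
    obtain T where T: "entourage T" "\<forall>y\<in>Y. \<forall>y'\<in>Y. (f y, f y') \<in> T \<longrightarrow> (y,y') \<in> E0"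
      using UI[OF sep Yc cf injY E0(1)] by blast
    obtain T' where T': "entourage T'" "\<forall>a b. (a,b)\<in>T' \<longrightarrow> (b,a)\<in>T'"
      "\<forall>a b c d. (a,b)\<in>T' \<longrightarrow> (b,c)\<in>T' \<longrightarrow> (c,d)\<in>T' \<longrightarrow> (a,d)\<in>T"
      using ent_split3[OF T(1)] by blast
    obtain U where U: "entourage U" "\<forall>a b. (a,b)\<in>U \<longrightarrow> (f a, f b)\<in>T'"
      using ent_uc[OF ucf T'(1)] by blast
    obtain i0 where i0: "\<forall>i. i0 \<le> i \<longrightarrow> (\<forall>z\<in>Z i. \<exists>y\<in>Y. (z,y) \<in> U \<inter> E0)"
      using hb[OF ent_int[OF U(1) E0(1)]] by blast
    have surjZ: "f ` Z i = Z i" if "i0 \<le> i" for i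
    proof -
      have "inj_on f (Z i)"
      proof (rule inj_onI, rule ccontr)
        fix z z' assume zz: "z \<in> Z i" "z' \<in> Z i" "f z = f z'" "z \<noteq> z'"
        then obtain g where g: "(act g z, act g z') \<notin> W0" using W0 by blast
        define w w' where "w = act g z" "w' = act g z'"
        have ww: "w \<in> Z i" "w' \<in> Z i" using inv zz unfolding w_w'_def by auto
        have fw: "f w = f w'" using assms(5) zz(3) unfolding equivariant_def w_w'_def by metis
        have i0i: "\<forall>z\<in>Z i. \<exists>y\<in>Y. (z,y) \<in> U \<inter> E0" using i0 that by blast
        obtain y where y: "y \<in> Y" "(w,y) \<in> U" "(w,y) \<in> E0" using bspec[OF i0i ww(1)] by blast
        obtain y' where y': "y' \<in> Y" "(w',y') \<in> U" "(w',y') \<in> E0" using bspec[OF i0i ww(2)] by blast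
        have "(f w, f y) \<in> T'" "(f w', f y') \<in> T'" using U y y' by auto
        hence "(f y, f w) \<in> T'" "(f w, f y') \<in> T'" using T'(2) fw by auto
        hence "(f y, f y') \<in> T" using T'(3)[rule_format, OF _ ent_refl[OF T'(1)]] by blast
        hence "(y,y') \<in> E0" using T y y' by blast
        moreover have "(y', w') \<in> E0" using E0(2) y' by blast
        ultimately have "(w,w') \<in> W0" using E0(3)[rule_format, OF y(3)] by blast
        thus False using g w_w'_def by simp
      qed
      thus ?thesis using assms(11) unfolding surjunctive_on_def by blast
    qed
    have "Y \<subseteq> f ` Y"
    proof
      fix y assume y: "y \<in> Y"
      show "y \<in> f ` Y"
      proof (rule CC[OF sep compact_continuous_image[OF cf Yc]], intro allI impI)
        fix V :: "('a \<times> 'a) set" assume V: "entourage V"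
        obtain E where E: "entourage E" "\<forall>a b. (a,b)\<in>E \<longrightarrow> (b,a)\<in>E"
          "\<forall>a b c d. (a,b)\<in>E \<longrightarrow> (b,c)\<in>E \<longrightarrow> (c,d)\<in>E \<longrightarrow> (a,d)\<in>V"
          using ent_split3[OF V] by blast
        obtain U1 where U1: "entourage U1" "\<forall>a b. (a,b)\<in>U1 \<longrightarrow> (f a, f b)\<in>E"
          using ent_uc[OF ucf E(1)] by blast
        obtain i1 where i1: "\<forall>i. i1 \<le> i \<longrightarrow> (\<forall>y\<in>Y. \<exists>z\<in>Z i. (y,z) \<in> U1 \<inter> E) \<and> (\<forall>z\<in>Z i. \<exists>y\<in>Y. (z,y) \<in> U1 \<inter> E)"
          using hb[OF ent_int[OF U1(1) E(1)]] by blast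
        obtain i where i: "i0 \<le> i" "i1 \<le> i" using assms(7) unfolding directed_type_def by blast
        obtain z where z: "z \<in> Z i" "(y,z) \<in> E" using i1 i y by blast
        then obtain w where w: "w \<in> Z i" "z = f w" using surjZ[OF i(1)] by blast
        then obtain y'' where y'': "y'' \<in> Y" "(w,y'') \<in> U1" using i1 i by blast
        have "(z, f y'') \<in> E" using U1 y'' w by blast
        hence "(y, f y'') \<in> V" using E(3)[rule_format, OF z(2) _ ent_refl[OF E(1)]] by blast
        thus "\<exists>a\<in>f ` Y. (y, a) \<in> V" using y'' by blast
      qed
    qed
    thus "f ` Y = Y" using fY by blast
  qed
  thus ?thesis using invY fY by blast
qed

end
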